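(* Let $H$ be a connected nontrivial graph of order $n$ and let $r\ge 1$ be an integer. Then $$n(r + 1) + r(dim_s(H) - 1)\le dim_s(C_{2r+1}\boxtimes H)\le n(r + 1) + r\cdot dim_s(H).$$
   Context: $C_{m}$ is the cycle on $m$ vertices. For a connected graph $G$ with shortest-path distance $d_G$, a vertex $w$ strongly resolves $u,v$ if $d_G(w,u)=d_G(w,v)+d_G(v,u)$ or $d_G(w,v)=d_G(w,u)+d_G(u,v)$; $dim_s(G)$ is the minimum cardinality of a set $S\subseteq V(G)$ such that every pair of vertices is strongly resolved by some vertex of $S$. The strong product $G\boxtimes H$ has vertex set $V(G)\times V(H)$, with $(a,b)\sim(c,d)$ iff ($a=c$ and $bd\in E(H)$) or ($ac\in E(G)$ and $b=d$) or ($ac\in E(G)$ and $bd\in E(H)$). Nontrivial means at least two vertices. *)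

theory Defs
  imports Main
begin

record 'a graph =
  verts :: "'a set"
  adj :: "'a \<Rightarrow> 'a \<Rightarrow> bool"

definition simple_graph :: "'a graph \<Rightarrow> bool" where
  "simple_graph G \<longleftrightarrow> finite (verts G)
     \<and> (\<forall>u v. adj G u v \<longrightarrow> u \<in> verts G \<and> v \<in> verts G)
     \<and> (\<forall>u v. adj G u v \<longrightarrow> adj G v u)
     \<and> (\<forall>u. \<not> adj G u u)"

inductive walk_len :: "'a graph \<Rightarrow> 'a \<Rightarrow> 'a \<Rightarrow> nat \<Rightarrow> bool" for G where
  walk_nil: "u \<in> verts G \<Longrightarrow> walk_len G u u 0"
| walk_step: "adj G u w \<Longrightarrow> walk_len G w v k \<Longrightarrow> walk_len G u v (Suc k)"

definition connected_graph :: "'a graph \<Rightarrow> bool" where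
  "connected_graph G \<longleftrightarrow> (\<forall>u\<in>verts G. \<forall>v\<in>verts G. \<exists>k. walk_len G u v k)"

definition gdist :: "'a graph \<Rightarrow> 'a \<Rightarrow> 'a \<Rightarrow> nat" where
  "gdist G u v = (LEAST k. walk_len G u v k)"

definition strongly_resolves :: "'a graph \<Rightarrow> 'a \<Rightarrow> 'a \<Rightarrow> 'a \<Rightarrow> bool" where
  "strongly_resolves G w u v \<longleftrightarrow>
     gdist G w u = gdist G w v + gdist G v u \<or> gdist G w v = gdist G w u + gdist G u v"

definition strong_resolving_set :: "'a graph \<Rightarrow> 'a set \<Rightarrow> bool" where
  "strong_resolving_set G S \<longleftrightarrow> S \<subseteq> verts G \<and>
     (\<forall>u\<in>verts G. \<forall>v\<in>verts G. u \<noteq> v \<longrightarrow> (\<exists>w\<in>S. strongly_resolves G w u v))"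

definition strong_metric_dim :: "'a graph \<Rightarrow> nat" where
  "strong_metric_dim G = (LEAST k. \<exists>S. strong_resolving_set G S \<and> card S = k)"

definition strong_product :: "'a graph \<Rightarrow> 'b graph \<Rightarrow> ('a \<times> 'b) graph" where
  "strong_product G H = \<lparr> verts = verts G \<times> verts H,
     adj = (\<lambda>(a, b) (c, d). (a = c \<and> adj H b d) \<or> (adj G a c \<and> b = d) \<or> (adj G a c \<and> adj H b d)) \<rparr>"

text \<open>The cycle C_m on vertices 0..m-1 (intended for m \<ge> 3).\<close>
definition cycle_graph :: "nat \<Rightarrow> nat graph" where
  "cycle_graph m = \<lparr> verts = {0..<m},
     adj = (\<lambda>i j. i < m \<and> j < m \<and> i \<noteq> j \<and> (Suc i mod m = j \<or> Suc j mod m = i)) \<rparr>"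

end

theory Submission
  imports Defs
begin

lemma finite_argmax:
  fixes f :: "'x \<Rightarrow> nat"
  assumes "finite A" "x \<in> A"
  shows "\<exists>y\<in>A. \<forall>z\<in>A. f z \<le> f y"
proof -
  have "f ` A \<noteq> {}" "finite (f ` A)" using assms by auto
  then have "Max (f ` A) \<in> f ` A" by (intro Max_in) auto
  then obtain y where "y \<in> A" "f y = Max (f ` A)" by auto
  moreover have "\<forall>z\<in>A. f z \<le> Max (f ` A)" using assms by auto
  ultimately show ?thesis by metis
qed

definition mmd :: "'a graph \<Rightarrow> 'a \<Rightarrow> 'a \<Rightarrow> bool" where
  "mmd G u v \<longleftrightarrow> u \<in> verts G \<and> v \<in> verts G \<and> u \<noteq> v
     \<and> (\<forall>w. adj G u w \<longrightarrow> gdist G w v \<le> gdist G u v)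
     \<and> (\<forall>w. adj G v w \<longrightarrow> gdist G u w \<le> gdist G u v)"

definition graph_ok :: "'a graph \<Rightarrow> bool" where
  "graph_ok G \<longleftrightarrow> finite (verts G)
     \<and> (\<forall>u v. adj G u v \<longrightarrow> u \<in> verts G \<longrightarrow> v \<in> verts G)
     \<and> (\<forall>u v. adj G u v \<longrightarrow> adj G v u)
     \<and> (\<forall>u. \<not> adj G u u)"

lemma simple_ok: "simple_graph G \<Longrightarrow> graph_ok G"
  unfolding simple_graph_def graph_ok_def by blast

locale sg =
  fixes G :: "'v graph"
  assumes simple: "graph_ok G" and conn: "connected_graph G"
begin

lemma adjV: "adj G u v \<Longrightarrow> u \<in> verts G \<Longrightarrow> v \<in> verts G"
  using simple unfolding graph_ok_def by blast

lemma adj_sym: "adj G u v \<Longrightarrow> adj G v u"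
  using simple unfolding graph_ok_def by blast

lemma adj_irrefl: "\<not> adj G u u"
  using simple unfolding graph_ok_def by blast

lemma finV: "finite (verts G)"
  using simple unfolding graph_ok_def by blast

lemma walk_verts: "walk_len G u v k \<Longrightarrow> v \<in> verts G"
  by (induction rule: walk_len.induct) simp_all

lemma walk_snoc: "walk_len G u w k \<Longrightarrow> adj G w v \<Longrightarrow> walk_len G u v (Suc k)"
proof (induction rule: walk_len.induct)
  case (walk_nil u)
  then have "v \<in> verts G" using adjV[of u v] by blast
  then show ?case using walk_nil walk_len.walk_step walk_len.walk_nil by metis
next
  case (walk_step u w' v' k)
  then show ?case using walk_len.walk_step[of G u w'] by simp
qed

lemma walk_sym: "walk_len G u v k \<Longrightarrow> walk_len G v u k"
proof (induction rule: walk_len.induct)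
  case (walk_nil u)
  then show ?case by (rule walk_len.walk_nil)
next
  case (walk_step u w v k)
  then show ?case using walk_snoc[of v w k u] adj_sym[of u w] by simp
qed

lemma walk_trans: "walk_len G u w k \<Longrightarrow> walk_len G w v l \<Longrightarrow> walk_len G u v (k + l)"
proof (induction rule: walk_len.induct)
  case (walk_step u w' v' k)
  then show ?case using walk_len.walk_step[of G u w'] by simp
qed simp

lemma dist_walk: "u \<in> verts G \<Longrightarrow> v \<in> verts G \<Longrightarrow> walk_len G u v (gdist G u v)"
  unfolding gdist_def using conn unfolding connected_graph_def by (meson LeastI_ex)

lemma dist_le: "walk_len G u v k \<Longrightarrow> gdist G u v \<le> k"
  unfolding gdist_def by (rule Least_le)

lemma dist_sym: "u \<in> verts G \<Longrightarrow> v \<in> verts G \<Longrightarrow> gdist G u v = gdist G v u"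
  by (meson antisym dist_le dist_walk walk_sym)

lemma dist_tri: "u \<in> verts G \<Longrightarrow> v \<in> verts G \<Longrightarrow> w \<in> verts G \<Longrightarrow>
   gdist G u v \<le> gdist G u w + gdist G w v"
  by (meson dist_le dist_walk walk_trans)

lemma dist_self: "u \<in> verts G \<Longrightarrow> gdist G u u = 0"
  using dist_le walk_len.walk_nil by fastforce

lemma dist_0: "u \<in> verts G \<Longrightarrow> v \<in> verts G \<Longrightarrow> gdist G u v = 0 \<Longrightarrow> u = v"
  using dist_walk[of u v] by (auto elim: walk_len.cases)

lemma dist_adj: "adj G u w \<Longrightarrow> u \<in> verts G \<Longrightarrow> v \<in> verts G \<Longrightarrow> gdist G u v \<le> gdist G w v + 1"
  using dist_walk[of w v] adjV[of u w] dist_le walk_len.walk_step by fastforce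

lemma dist_adj1: "adj G u w \<Longrightarrow> u \<in> verts G \<Longrightarrow> gdist G u w = 1"
proof -
  assume a: "adj G u w" and uV: "u \<in> verts G"
  have wV: "w \<in> verts G" using adjV[OF a uV] .
  have "gdist G u w \<le> 1" using dist_adj[OF a uV wV] dist_self[OF wV] by auto
  moreover have "u \<noteq> w" using a adj_irrefl by blast
  ultimately show ?thesis using dist_0 uV wV by fastforce
qed

lemma dist_step: "u \<in> verts G \<Longrightarrow> v \<in> verts G \<Longrightarrow> u \<noteq> v \<Longrightarrow>
   \<exists>w. adj G u w \<and> gdist G w v + 1 = gdist G u v"
proof -
  assume uv: "u \<in> verts G" "v \<in> verts G" "u \<noteq> v"
  have "walk_len G u v (gdist G u v)" using dist_walk uv by auto
  then obtain w k where w: "adj G u w" "walk_len G w v k" "gdist G u v = Suc k"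
    using uv by (cases rule: walk_len.cases) auto
  have "gdist G w v \<le> k" using w dist_le by auto
  moreover have "gdist G u v \<le> gdist G w v + 1" using dist_adj[OF w(1) uv(1) uv(2)] .
  ultimately show ?thesis using w(1,3) by auto
qed

lemma mmd_sym: "mmd G u v \<Longrightarrow> mmd G v u"
proof -
  assume m: "mmd G u v"
  then have uv: "u \<in> verts G" "v \<in> verts G" "u \<noteq> v" unfolding mmd_def by auto
  have a: "gdist G w u \<le> gdist G v u" if "adj G v w" for w
  proof -
    have "gdist G u w \<le> gdist G u v" using m that unfolding mmd_def by auto
    moreover have "w \<in> verts G" using adjV[OF that] uv by auto
    ultimately show ?thesis using dist_sym uv by auto
  qed
  have b: "gdist G v w \<le> gdist G v u" if "adj G u w" for w
  proof -
    have "gdist G w v \<le> gdist G u v" using m that unfolding mmd_def by auto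
    moreover have "w \<in> verts G" using adjV[OF that] uv by auto
    ultimately show ?thesis using dist_sym uv by auto
  qed
  show ?thesis unfolding mmd_def using uv a b by auto
qed

lemma resolving_mmd:
  assumes S: "strong_resolving_set G S" and m: "mmd G u v"
  shows "u \<in> S \<or> v \<in> S"
proof -
  have uv: "u \<in> verts G" "v \<in> verts G" "u \<noteq> v" using m unfolding mmd_def by auto
  obtain w where w: "w \<in> S" "strongly_resolves G w u v"
    using S uv unfolding strong_resolving_set_def by blast
  have wV: "w \<in> verts G" using S w unfolding strong_resolving_set_def by auto
  have duv: "gdist G u v > 0" using dist_0 uv by fastforce
  show ?thesis
  proof (rule ccontr)
    assume "\<not> ?thesis"
    then have wu: "w \<noteq> u" "w \<noteq> v" using w by auto
    consider "gdist G w u = gdist G w v + gdist G v u" | "gdist G w v = gdist G w u + gdist G u v"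
      using w unfolding strongly_resolves_def by blast
    then show False
    proof cases
      case 1
      obtain v' where v': "adj G v v'" "gdist G v' w + 1 = gdist G v w"
        using dist_step[of v w] uv wV wu by auto
      have v'V: "v' \<in> verts G" using adjV[OF v'(1)] uv by auto
      have "gdist G w u \<le> gdist G w v' + gdist G v' u" using dist_tri wV v'V uv by auto
      moreover have "gdist G u v' \<le> gdist G u v" using m v' unfolding mmd_def by auto
      moreover have "gdist G w v = gdist G v w" "gdist G w v' = gdist G v' w" "gdist G v' u = gdist G u v'"
        "gdist G v u = gdist G u v" using dist_sym uv wV v'V by auto
      ultimately show False using 1 v' by linarith
    next
      case 2
      obtain u' where u': "adj G u u'" "gdist G u' w + 1 = gdist G u w"
        using dist_step[of u w] uv wV wu by auto
      have u'V: "u' \<in> verts G" using adjV[OF u'(1)] uv by auto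
      have "gdist G w v \<le> gdist G w u' + gdist G u' v" using dist_tri wV u'V uv by auto
      moreover have "gdist G u' v \<le> gdist G u v" using m u' unfolding mmd_def by auto
      moreover have "gdist G w u = gdist G u w" "gdist G w u' = gdist G u' w" "gdist G u' v = gdist G u' v"
        using dist_sym uv wV u'V by auto
      ultimately show False using 2 u' by linarith
    qed
  qed
qed

lemma mmd_resolving:
  assumes SV: "S \<subseteq> verts G" and cov: "\<And>x y. mmd G x y \<Longrightarrow> x \<in> S \<or> y \<in> S"
  shows "strong_resolving_set G S"
  unfolding strong_resolving_set_def
proof (intro conjI ballI impI SV)
  fix u v assume uV: "u \<in> verts G" and vV: "v \<in> verts G" and uv: "u \<noteq> v"
  let ?d = "gdist G"
  have duv: "?d u v > 0" using dist_0 uV vV uv by fastforce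
  define A where "A = {x \<in> verts G. ?d v x = ?d v u + ?d u x}"
  have "u \<in> A" unfolding A_def using uV dist_self by auto
  moreover have "finite A" unfolding A_def using finV by auto
  ultimately obtain x where xA: "x \<in> A" and xmax: "\<forall>z\<in>A. ?d v z \<le> ?d v x"
    using finite_argmax[of A u "?d v"] by blast
  have xV: "x \<in> verts G" and x1: "?d v x = ?d v u + ?d u x" using xA unfolding A_def by auto
  define B where "B = {y \<in> verts G. ?d x y = ?d x v + ?d v y}"
  have "v \<in> B" unfolding B_def using vV dist_self by auto
  moreover have "finite B" unfolding B_def using finV by auto
  ultimately obtain y where yB: "y \<in> B" and ymax: "\<forall>z\<in>B. ?d x z \<le> ?d x y"
    using finite_argmax[of B v "?d x"] by blast
  have yV: "y \<in> verts G" and y1: "?d x y = ?d x v + ?d v y" using yB unfolding B_def by auto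
  have sym: "\<And>a b. a \<in> verts G \<Longrightarrow> b \<in> verts G \<Longrightarrow> ?d a b = ?d b a" using dist_sym by auto
  have tri: "\<And>a b c. a \<in> verts G \<Longrightarrow> b \<in> verts G \<Longrightarrow> c \<in> verts G \<Longrightarrow> ?d a b \<le> ?d a c + ?d c b"
    using dist_tri by auto
  have "mmd G x y"
    unfolding mmd_def
  proof (intro conjI allI impI xV yV)
    have "?d x y \<ge> ?d x v" using y1 by auto
    moreover have "?d x v > 0" using x1 duv sym xV vV uV by auto
    ultimately show "x \<noteq> y" using dist_self xV by auto
  next
    fix w assume w: "adj G x w"
    have wV: "w \<in> verts G" using adjV[OF w xV] by auto
    have "?d v w \<le> ?d v x"
    proof (rule ccontr)
      assume c: "\<not> ?thesis"
      have "?d v w \<le> ?d v x + 1" using dist_adj[OF adj_sym[OF w] wV vV] sym wV vV xV by auto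
      moreover have "?d u w \<le> ?d u x + 1" using dist_adj[OF adj_sym[OF w] wV uV] sym wV uV xV by auto
      moreover have "?d v w \<le> ?d v u + ?d u w" using tri vV wV uV by auto
      ultimately have "w \<in> A" unfolding A_def using c x1 wV by auto
      then show False using xmax c by auto
    qed
    then show "?d w y \<le> ?d x y" using tri[OF wV yV vV] y1 sym wV vV xV by auto
  next
    fix w assume w: "adj G y w"
    have wV: "w \<in> verts G" using adjV[OF w yV] by auto
    show "?d x w \<le> ?d x y"
    proof (rule ccontr)
      assume c: "\<not> ?thesis"
      have "?d x w \<le> ?d x y + 1" using dist_adj[OF adj_sym[OF w] wV xV] sym wV yV xV by auto
      moreover have "?d v w \<le> ?d v y + 1" using dist_adj[OF adj_sym[OF w] wV vV] sym wV yV vV by auto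
      moreover have "?d x w \<le> ?d x v + ?d v w" using tri xV wV vV by auto
      ultimately have "w \<in> B" unfolding B_def using c y1 wV by auto
      then show False using ymax c by auto
    qed
  qed
  then have "x \<in> S \<or> y \<in> S" using cov by auto
  moreover have "strongly_resolves G x u v"
    unfolding strongly_resolves_def using x1 sym xV uV vV by auto
  moreover have "strongly_resolves G y u v"
  proof -
    have "?d x y \<le> ?d x u + ?d u y" using tri xV yV uV by auto
    moreover have "?d u y \<le> ?d u v + ?d v y" using tri uV yV vV by auto
    ultimately have "?d u y = ?d u v + ?d v y" using x1 y1 sym xV uV vV yV by auto
    then show ?thesis unfolding strongly_resolves_def using sym xV uV vV yV by auto
  qed
  ultimately show "\<exists>w\<in>S. strongly_resolves G w u v" by blast
qed

lemma resolving_V: "strong_resolving_set G (verts G)"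
  by (rule mmd_resolving) (auto simp: mmd_def)

lemma dim_le: "strong_resolving_set G S \<Longrightarrow> strong_metric_dim G \<le> card S"
  unfolding strong_metric_dim_def by (rule Least_le) blast

lemma dim_ex: "\<exists>S. strong_resolving_set G S \<and> card S = strong_metric_dim G"
  unfolding strong_metric_dim_def by (rule LeastI_ex) (use resolving_V in blast)

end



definition cd :: "nat \<Rightarrow> nat \<Rightarrow> nat \<Rightarrow> nat" where
  "cd m a c = (let t = (if a \<le> c then c - a else a - c) in min t (m - t))"
definition nx :: "nat \<Rightarrow> nat \<Rightarrow> nat" where "nx m a = (if Suc a < m then Suc a else 0)"
definition pv :: "nat \<Rightarrow> nat \<Rightarrow> nat" where "pv m a = (if a = 0 then m - 1 else a - 1)"

lemma cd_le: "a \<le> c \<Longrightarrow> cd m a c = min (c - a) (m - (c - a))"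
  by (simp add: cd_def)
lemma cd_ge: "c \<le> a \<Longrightarrow> cd m a c = min (a - c) (m - (a - c))"
  by (auto simp: cd_def)

lemma Suc_mod_nx: "a < m \<Longrightarrow> Suc a mod m = nx m a"
proof (cases "Suc a < m")
  case False
  assume "a < m"
  then have "Suc a = m" using False by simp
  then show ?thesis using False by (simp add: nx_def)
qed (simp add: nx_def)

lemma cyc_verts: "verts (cycle_graph m) = {0..<m}"
  by (simp add: cycle_graph_def)

lemma cyc_adj: "adj (cycle_graph m) a b \<longleftrightarrow> a < m \<and> b < m \<and> a \<noteq> b \<and> (b = nx m a \<or> a = nx m b)"
  by (auto simp add: cycle_graph_def Suc_mod_nx)

lemma cyc_simple: "simple_graph (cycle_graph m)"
  unfolding simple_graph_def cycle_graph_def by auto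

lemma nx_less: "a < m \<Longrightarrow> nx m a < m" by (simp add: nx_def)
lemma pv_less: "a < m \<Longrightarrow> pv m a < m" by (auto simp: pv_def)
lemma nx_pv: "a < m \<Longrightarrow> nx m (pv m a) = a" by (auto simp: nx_def pv_def)

lemma adj_nx: "a < m \<Longrightarrow> 3 \<le> m \<Longrightarrow> adj (cycle_graph m) a (nx m a)"
  unfolding cyc_adj by (auto simp: nx_def)

lemma adj_pv: "a < m \<Longrightarrow> 3 \<le> m \<Longrightarrow> adj (cycle_graph m) a (pv m a)"
  unfolding cyc_adj using nx_pv pv_less by (auto simp: pv_def split: if_splits)

lemma cd_toward: "a < m \<Longrightarrow> c < m \<Longrightarrow> a \<noteq> c \<Longrightarrow>
   cd m (nx m a) c + 1 = cd m a c \<or> cd m (pv m a) c + 1 = cd m a c"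
proof -
  assume h: "a < m" "c < m" "a \<noteq> c"
  consider "a < c" "2 * (c - a) \<le> m" | "a < c" "2 * (c - a) > m" "a = 0" | "a < c" "2 * (c - a) > m" "a > 0"
    | "c < a" "2 * (a - c) \<le> m" | "c < a" "2 * (a - c) > m" "Suc a = m" | "c < a" "2 * (a - c) > m" "Suc a < m"
    using h by linarith
  then show ?thesis
  proof cases
    case 1
    then have "nx m a = Suc a" using h by (simp add: nx_def)
    then show ?thesis using 1 by (auto simp: cd_le min_def)
  next
    case 2
    then have "pv m a = m - 1" by (simp add: pv_def)
    then show ?thesis using 2 h by (auto simp: cd_le cd_ge min_def)
  next
    case 3
    then have "pv m a = a - 1" by (simp add: pv_def)
    then show ?thesis using 3 h by (auto simp: cd_le min_def)
  next
    case 4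
    then have "pv m a = a - 1" by (simp add: pv_def)
    then show ?thesis using 4 h by (auto simp: cd_ge min_def)
  next
    case 5
    then have "nx m a = 0" by (simp add: nx_def)
    then show ?thesis using 5 h by (auto simp: cd_le cd_ge min_def)
  next
    case 6
    then have "nx m a = Suc a" by (simp add: nx_def)
    then show ?thesis using 6 h by (auto simp: cd_ge min_def)
  qed
qed

lemma cd_away: "m = 2 * r + 1 \<Longrightarrow> a < m \<Longrightarrow> c < m \<Longrightarrow> cd m a c < r \<Longrightarrow>
   cd m (nx m a) c = cd m a c + 1 \<or> cd m (pv m a) c = cd m a c + 1"
proof -
  assume h: "m = 2 * r + 1" "a < m" "c < m" "cd m a c < r"
  consider "a = c" | "a < c" "a = 0" | "a < c" "a > 0" | "c < a" "Suc a = m" | "c < a" "Suc a < m"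
    using h by linarith
  then show ?thesis
  proof cases
    case 1 then show ?thesis using h by (auto simp: cd_le cd_ge min_def nx_def pv_def split: if_splits; arith)
  next
    case 2 then show ?thesis using h by (auto simp: cd_le cd_ge min_def nx_def pv_def split: if_splits; arith)
  next
    case 3 then show ?thesis using h by (auto simp: cd_le cd_ge min_def nx_def pv_def split: if_splits; arith)
  next
    case 4 then show ?thesis using h by (auto simp: cd_le cd_ge min_def nx_def pv_def split: if_splits; arith)
  next
    case 5 then show ?thesis using h by (auto simp: cd_le cd_ge min_def nx_def pv_def split: if_splits; arith)
  qed
qed

lemma nx_near: "a < m \<Longrightarrow> c < m \<Longrightarrow> cd m (nx m a) c \<le> cd m a c + 1 \<and> cd m a c \<le> cd m (nx m a) c + 1"
proof -
  assume h: "a < m" "c < m"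
  consider "c \<le> a" "Suc a < m" | "a < c" | "c \<le> a" "Suc a = m"
    using h by linarith
  then show ?thesis
  proof cases
    case 1 then show ?thesis using h by (auto simp: cd_le cd_ge min_def nx_def)
  next
    case 2 then show ?thesis using h by (auto simp: cd_le cd_ge min_def nx_def)
  next
    case 3 then show ?thesis using h by (auto simp: cd_le cd_ge min_def nx_def)
  qed
qed

lemma cd_lip: "adj (cycle_graph m) a a' \<Longrightarrow> c < m \<Longrightarrow> cd m a c \<le> cd m a' c + 1"
  unfolding cyc_adj using nx_near by blast

lemma cd_le_r: "m = 2 * r + 1 \<Longrightarrow> cd m a c \<le> r"
  by (auto simp: cd_def Let_def)

lemma cd_self: "cd m a a = 0"
  by (auto simp: cd_def Let_def)

lemma cd_sym: "cd m a c = cd m c a"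
  by (auto simp: cd_def Let_def)

lemma cd_0: "a < m \<Longrightarrow> c < m \<Longrightarrow> cd m a c = 0 \<Longrightarrow> a = c"
  by (auto simp: cd_def Let_def split: if_splits)

lemma cd_high: "m = 2 * r + 1 \<Longrightarrow> r < a \<Longrightarrow> r < c \<Longrightarrow> a < m \<Longrightarrow> c < m \<Longrightarrow> cd m a c < r"
  by (auto simp: cd_def Let_def)

lemma cyc_walk_ex: "3 \<le> m \<Longrightarrow> a < m \<Longrightarrow> c < m \<Longrightarrow> cd m a c \<le> k \<Longrightarrow>
   \<exists>j \<le> k. walk_len (cycle_graph m) a c j"
proof (induction k arbitrary: a)
  case 0
  then have "a = c" using cd_0 by auto
  then show ?case using 0 walk_len.walk_nil[of c "cycle_graph m"] by (auto simp: cyc_verts)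
next
  case (Suc k)
  show ?case
  proof (cases "a = c")
    case True
    then show ?thesis using Suc walk_len.walk_nil[of c "cycle_graph m"] by (auto simp: cyc_verts)
  next
    case False
    then obtain a' where a': "adj (cycle_graph m) a a'" "cd m a' c + 1 = cd m a c"
      using cd_toward[of a m c] adj_nx adj_pv Suc.prems by metis
    then have "a' < m" using cyc_adj by auto
    then obtain j where "j \<le> k" "walk_len (cycle_graph m) a' c j"
      using Suc a' by fastforce
    then show ?thesis using a' walk_len.walk_step by (metis Suc_le_mono)
  qed
qed



lemma cyc_sg: "3 \<le> m \<Longrightarrow> sg (cycle_graph m)"
proof (unfold_locales)
  show "graph_ok (cycle_graph m)" by (rule simple_ok[OF cyc_simple])
  assume "3 \<le> m"
  then show "connected_graph (cycle_graph m)"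
    unfolding connected_graph_def cyc_verts using cyc_walk_ex[of m _ _ "cd m _ _"] by fastforce
qed

lemma cyc_walk_cd: "walk_len (cycle_graph m) a c k \<Longrightarrow> cd m a c \<le> k"
proof (induction rule: walk_len.induct)
  case (walk_nil u)
  then show ?case by (simp add: cd_self)
next
  case (walk_step u w v k)
  have "v \<in> verts (cycle_graph m)"
    using walk_step(2) by (induction rule: walk_len.induct) auto
  then have "v < m" by (simp add: cyc_verts)
  have "cd m u v \<le> cd m w v + 1" using cd_lip[OF walk_step(1) \<open>v < m\<close>] .
  then show ?case using walk_step(3) by simp
qed

lemma cyc_dist: "3 \<le> m \<Longrightarrow> a < m \<Longrightarrow> c < m \<Longrightarrow> gdist (cycle_graph m) a c = cd m a c"
proof -
  assume h: "3 \<le> m" "a < m" "c < m"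
  interpret C: sg "cycle_graph m" using cyc_sg h by blast
  obtain j where "j \<le> cd m a c" "walk_len (cycle_graph m) a c j" using cyc_walk_ex h by blast
  then have "gdist (cycle_graph m) a c \<le> cd m a c" using C.dist_le by fastforce
  moreover have "cd m a c \<le> gdist (cycle_graph m) a c"
    using cyc_walk_cd C.dist_walk h by (simp add: cyc_verts)
  ultimately show ?thesis by simp
qed

lemma sp_verts: "verts (strong_product G H) = verts G \<times> verts H"
  by (simp add: strong_product_def)

lemma sp_adj: "adj (strong_product G H) (a, b) (c, d) \<longleftrightarrow>
  (a = c \<and> adj H b d) \<or> (adj G a c \<and> b = d) \<or> (adj G a c \<and> adj H b d)"
  by (simp add: strong_product_def)

lemma sp_ok: "simple_graph G \<Longrightarrow> graph_ok H \<Longrightarrow> graph_ok (strong_product G H)"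
  unfolding simple_graph_def graph_ok_def strong_product_def by auto

lemma sp_walk_verts: "walk_len (strong_product G H) p q k \<Longrightarrow> q \<in> verts (strong_product G H)"
  by (induction rule: walk_len.induct) auto

locale prod =
  fixes H :: "'a graph" and r :: nat
  assumes H: "sg H" and r1: "1 \<le> r"
begin

abbreviation "m \<equiv> 2 * r + 1"
abbreviation "C \<equiv> cycle_graph (2 * r + 1)"
abbreviation "P \<equiv> strong_product (cycle_graph (2 * r + 1)) H"

sublocale Hs: sg H by (rule H)

lemma m3: "3 \<le> m" using r1 by simp

lemma dC: "a < m \<Longrightarrow> c < m \<Longrightarrow> gdist C a c = cd m a c"
  using cyc_dist m3 by blast

lemma P_verts[simp]: "verts (strong_product (cycle_graph k) H) = {0..<k} \<times> verts H"
  by (simp add: sp_verts cyc_verts)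

lemma P_simple: "graph_ok P"
  using sp_ok cyc_simple Hs.simple by blast

lemma P_nb: "adj P (a, b) (x, y) \<Longrightarrow> c < m \<Longrightarrow> a < m \<Longrightarrow> b \<in> verts H \<Longrightarrow>
   x < m \<and> y \<in> verts H \<and> cd m x c \<le> cd m a c + 1 \<and> cd m a c \<le> cd m x c + 1 \<and> (y = b \<or> adj H b y)"
proof -
  assume h: "adj P (a, b) (x, y)" "c < m" "a < m" "b \<in> verts H"
  have "(a, b) \<in> verts P" using h by simp
  then have "(x, y) \<in> verts P" using P_simple h(1) unfolding graph_ok_def by blast
  then have v: "x < m" "y \<in> verts H" by auto
  have "(a = x \<and> adj H b y) \<or> (adj C a x \<and> b = y) \<or> (adj C a x \<and> adj H b y)"
    using h sp_adj by metis
  moreover have "adj C a x \<Longrightarrow> cd m x c \<le> cd m a c + 1 \<and> cd m a c \<le> cd m x c + 1"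
    using cd_lip h(2) cyc_simple unfolding simple_graph_def by blast
  ultimately show ?thesis using v h by auto
qed

lemma P_walk_lower: "walk_len P p q k \<Longrightarrow> p \<in> verts P \<Longrightarrow> cd m (fst p) (fst q) \<le> k \<and> gdist H (snd p) (snd q) \<le> k"
proof (induction rule: walk_len.induct)
  case (walk_nil u)
  then show ?case using Hs.dist_self by (cases u) (auto simp: cd_self)
next
  case (walk_step u w v k)
  have "v \<in> verts P" using walk_step(2) by (rule sp_walk_verts)
  then have vv: "fst v < m" "snd v \<in> verts H" by (auto simp: P_verts)
  obtain a b x y where uw: "u = (a, b)" "w = (x, y)" by fastforce
  have ab: "a < m" "b \<in> verts H" using walk_step(4) uw by auto
  have "w \<in> verts P" using P_simple walk_step(1,4) unfolding graph_ok_def by blast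
  then have IH: "cd m (fst w) (fst v) \<le> k \<and> gdist H (snd w) (snd v) \<le> k" using walk_step(3) by blast
  have nb: "cd m a (fst v) \<le> cd m x (fst v) + 1" "y = b \<or> adj H b y"
    using P_nb[of a b x y "fst v"] walk_step(1) uw vv ab by auto
  have "gdist H b (snd v) \<le> gdist H y (snd v) + 1"
    using nb(2) Hs.dist_adj[of b y "snd v"] vv ab by auto
  then show ?case using IH nb uw by auto
qed

lemma P_walk_upper: "c < m \<Longrightarrow> d \<in> verts H \<Longrightarrow> x < m \<Longrightarrow> y \<in> verts H \<Longrightarrow>
  cd m x c \<le> k \<Longrightarrow> gdist H y d \<le> k \<Longrightarrow> \<exists>j\<le>k. walk_len P (x, y) (c, d) j"
proof (induction k arbitrary: x y)
  case 0
  then have "x = c" "y = d" using cd_0 Hs.dist_0 by auto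
  moreover have "(c, d) \<in> verts P" using 0 by simp
  ultimately show ?case using walk_len.walk_nil[of "(c, d)" P] by auto
next
  case (Suc k)
  have cdV: "(c, d) \<in> verts P" using Suc.prems by simp
  show ?case
  proof (cases "x = c \<and> y = d")
    case True
    then show ?thesis using cdV walk_len.walk_nil[of "(c, d)" P] by auto
  next
    case False
    obtain x' where x': "(x = c \<and> x' = x) \<or> (x \<noteq> c \<and> adj C x x')" "x' < m" "cd m x' c \<le> k"
    proof (cases "x = c")
      case True then show ?thesis using that Suc.prems by (auto simp: cd_self)
    next
      case False
      then obtain x' where "adj C x x'" "cd m x' c + 1 = cd m x c"
        using cd_toward[of x m c] adj_nx adj_pv Suc.prems m3 by metis
      moreover then have "x' < m" using cyc_adj by auto
      ultimately show ?thesis using that Suc.prems False by auto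
    qed
    obtain y' where y': "(y = d \<and> y' = y) \<or> (y \<noteq> d \<and> adj H y y')" "y' \<in> verts H" "gdist H y' d \<le> k"
    proof (cases "y = d")
      case True then show ?thesis using that Suc.prems Hs.dist_self by auto
    next
      case False
      then obtain y' where "adj H y y'" "gdist H y' d + 1 = gdist H y d"
        using Hs.dist_step Suc.prems by metis
      moreover then have "y' \<in> verts H" using Hs.adjV Suc.prems(4) by blast
      ultimately show ?thesis using that Suc.prems False by auto
    qed
    have "adj P (x, y) (x', y')"
      unfolding sp_adj using x'(1) y'(1) False by auto
    moreover obtain j where "j \<le> k" "walk_len P (x', y') (c, d) j"
      using Suc.IH[of x' y'] Suc.prems x' y' by auto
    ultimately show ?thesis using walk_len.walk_step[of P "(x, y)" "(x', y')"] by (metis Suc_le_mono)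
  qed
qed

lemma P_conn: "connected_graph P"
  unfolding connected_graph_def
proof (intro ballI)
  fix p q assume "p \<in> verts P" "q \<in> verts P"
  then obtain x y c d where pq: "p = (x, y)" "q = (c, d)" "x < m" "c < m" "y \<in> verts H" "d \<in> verts H"
    by auto
  show "\<exists>k. walk_len P p q k"
    using P_walk_upper[of c d x y "max (cd m x c) (gdist H y d)"] pq by auto
qed

sublocale Ps: sg P by (unfold_locales) (rule P_simple, rule P_conn)

lemma dP: "a < m \<Longrightarrow> c < m \<Longrightarrow> b \<in> verts H \<Longrightarrow> d \<in> verts H \<Longrightarrow>
  gdist P (a, b) (c, d) = max (cd m a c) (gdist H b d)"
proof -
  assume h: "a < m" "c < m" "b \<in> verts H" "d \<in> verts H"
  have V: "(a, b) \<in> verts P" "(c, d) \<in> verts P" using h by simp_all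
  obtain j where "j \<le> max (cd m a c) (gdist H b d)" "walk_len P (a, b) (c, d) j"
    using P_walk_upper[of c d a b "max (cd m a c) (gdist H b d)"] h by auto
  then have "gdist P (a, b) (c, d) \<le> max (cd m a c) (gdist H b d)" using Ps.dist_le by fastforce
  moreover have "cd m a c \<le> gdist P (a, b) (c, d) \<and> gdist H b d \<le> gdist P (a, b) (c, d)"
    using P_walk_lower[OF Ps.dist_walk[OF V] V(1)] by simp
  ultimately show ?thesis by (meson antisym max.boundedI)
qed

end


context prod
begin

lemma mmdP_nec:
  assumes mm: "mmd P (a, b) (c, d)"
  shows "cd m a c = r \<or> mmd H b d"
proof -
  have V: "a < m" "c < m" "b \<in> verts H" "d \<in> verts H" "(a, b) \<noteq> (c, d)"
    using mm unfolding mmd_def by auto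
  have gP: "gdist P (a, b) (c, d) = max (cd m a c) (gdist H b d)" using dP V by blast
  show ?thesis
  proof (cases "cd m a c < gdist H b d")
    case True
    have "mmd H b d"
      unfolding mmd_def
    proof (intro conjI allI impI)
      show "b \<in> verts H" "d \<in> verts H" using V by auto
      show "b \<noteq> d" using True Hs.dist_self V by auto
    next
      fix w assume w: "adj H b w"
      have wV: "w \<in> verts H" using Hs.adjV w V by blast
      have "adj P (a, b) (a, w)" using w sp_adj by metis
      then have "gdist P (a, w) (c, d) \<le> gdist P (a, b) (c, d)" using mm unfolding mmd_def by blast
      then show "gdist H w d \<le> gdist H b d" using dP[of a c w d] V wV gP True by auto
    next
      fix w assume w: "adj H d w"
      have wV: "w \<in> verts H" using Hs.adjV w V by blast
      have "adj P (c, d) (c, w)" using w sp_adj by metis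
      then have "gdist P (a, b) (c, w) \<le> gdist P (a, b) (c, d)" using mm unfolding mmd_def by blast
      then show "gdist H b w \<le> gdist H b d" using dP[of a c b w] V wV gP True by auto
    qed
    then show ?thesis by simp
  next
    case False
    show ?thesis
    proof (rule ccontr)
      assume "\<not> ?thesis"
      then have lt: "cd m a c < r" using cd_le_r[of m r a c] by auto
      then obtain a' where a': "adj C a a'" "cd m a' c = cd m a c + 1"
        using cd_away[of m r a c] adj_nx adj_pv V m3 by metis
      have a'm: "a' < m" using a' cyc_adj by auto
      have "adj P (a, b) (a', b)" using a'(1) sp_adj by metis
      then have "gdist P (a', b) (c, d) \<le> gdist P (a, b) (c, d)" using mm unfolding mmd_def by blast
      then show False using dP[of a' c b d] V a'm gP False a'(2) by auto
    qed
  qed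
qed

lemma mmdP_A:
  assumes V: "a < m" "c < m" "b \<in> verts H" "d \<in> verts H" and cr: "cd m a c = r"
    and bd: "b = d \<or> mmd H b d"
  shows "mmd P (a, b) (c, d)"
  unfolding mmd_def
proof (intro conjI allI impI)
  show "(a, b) \<in> verts P" "(c, d) \<in> verts P" using V by auto
  show "(a, b) \<noteq> (c, d)" using cr cd_self r1 by (metis le_numeral_extra(2) not_one_le_zero prod.inject)
next
  fix w assume w: "adj P (a, b) w"
  obtain x y where xy: "w = (x, y)" by fastforce
  have nb: "x < m" "y \<in> verts H" "y = b \<or> adj H b y"
    using P_nb[of a b x y c] w xy V by auto
  have "cd m x c \<le> r" using cd_le_r by blast
  moreover have "gdist H y d \<le> max r (gdist H b d)"
  proof -
    consider "y = b" | "adj H b y" "b = d" | "adj H b y" "mmd H b d" using nb bd by blast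
    then show ?thesis
    proof cases
      case 2 then show ?thesis using Hs.dist_adj1[of y b] Hs.adj_sym[of b y] nb(2) V r1 by auto
    next
      case 3 then show ?thesis unfolding mmd_def by auto
    qed auto
  qed
  ultimately show "gdist P w (c, d) \<le> gdist P (a, b) (c, d)"
    using dP[of x c y d] dP[of a c b d] V nb xy cr by auto
next
  fix w assume w: "adj P (c, d) w"
  obtain x y where xy: "w = (x, y)" by fastforce
  have nb: "x < m" "y \<in> verts H" "y = d \<or> adj H d y"
    using P_nb[of c d x y a] w xy V by auto
  have "cd m a x \<le> r" using cd_le_r by blast
  moreover have "gdist H b y \<le> max r (gdist H b d)"
  proof -
    consider "y = d" | "adj H d y" "b = d" | "adj H d y" "mmd H b d" using nb bd by blast
    then show ?thesis
    proof cases
      case 2 then show ?thesis using Hs.dist_adj1[of d y] V r1 by auto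
    next
      case 3 then show ?thesis unfolding mmd_def by auto
    qed auto
  qed
  ultimately show "gdist P (a, b) w \<le> gdist P (a, b) (c, d)"
    using dP[of a x b y] dP[of a c b d] V nb xy cr by auto
qed

lemma mmdP_B:
  assumes V: "a < m" "c < m" and mm: "mmd H b d" and lt: "cd m a c < gdist H b d"
  shows "mmd P (a, b) (c, d)"
  unfolding mmd_def
proof (intro conjI allI impI)
  have bd: "b \<in> verts H" "d \<in> verts H" "b \<noteq> d" using mm unfolding mmd_def by auto
  show "(a, b) \<in> verts P" "(c, d) \<in> verts P" using V bd by auto
  show "(a, b) \<noteq> (c, d)" using bd by auto
next
  fix w assume w: "adj P (a, b) w"
  have bd: "b \<in> verts H" "d \<in> verts H" using mm unfolding mmd_def by auto
  obtain x y where xy: "w = (x, y)" by fastforce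
  have nb: "x < m" "y \<in> verts H" "y = b \<or> adj H b y" "cd m x c \<le> cd m a c + 1"
    using P_nb[of a b x y c] w xy V bd by auto
  have "gdist H y d \<le> gdist H b d" using nb(3) mm unfolding mmd_def by auto
  then show "gdist P w (c, d) \<le> gdist P (a, b) (c, d)"
    using dP[of x c y d] dP[of a c b d] V nb xy lt bd by auto
next
  fix w assume w: "adj P (c, d) w"
  have bd: "b \<in> verts H" "d \<in> verts H" using mm unfolding mmd_def by auto
  obtain x y where xy: "w = (x, y)" by fastforce
  have nb: "x < m" "y \<in> verts H" "y = d \<or> adj H d y" "cd m x a \<le> cd m c a + 1"
    using P_nb[of c d x y a] w xy V bd by auto
  have "gdist H b y \<le> gdist H b d" using nb(3) mm unfolding mmd_def by auto
  then show "gdist P (a, b) w \<le> gdist P (a, b) (c, d)"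
    using dP[of a x b y] dP[of a c b d] V nb xy lt bd cd_sym[of m a x] cd_sym[of m a c] by auto
qed

end


definition win :: "nat \<Rightarrow> nat \<Rightarrow> nat \<Rightarrow> nat set" where
  "win m r p = {p, (p + r) mod m, (p + 2 * r) mod m}"

lemma mod_2m: "(x::nat) < 2 * m \<Longrightarrow> x mod m = (if x < m then x else x - m)"
  by (simp add: le_mod_geq)

lemma cd_r: "m = 2 * r + 1 \<Longrightarrow> 1 \<le> r \<Longrightarrow> p < m \<Longrightarrow> cd m p ((p + r) mod m) = r"
proof -
  assume h: "m = 2 * r + 1" "1 \<le> r" "p < m"
  show ?thesis
  proof (cases "p + r < m")
    case True
    then have "(p + r) mod m = p + r" by simp
    then show ?thesis using h True by (simp add: cd_le min_def)
  next
    case False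
    then have "(p + r) mod m = p + r - m" using mod_2m[of "p + r" m] h by auto
    then show ?thesis using h False by (auto simp: cd_ge min_def)
  qed
qed

lemma cd_1: "m = 2 * r + 1 \<Longrightarrow> 1 \<le> r \<Longrightarrow> p < m \<Longrightarrow> cd m p ((p + 2 * r) mod m) = 1"
proof -
  assume h: "m = 2 * r + 1" "1 \<le> r" "p < m"
  show ?thesis
  proof (cases "p + 2 * r < m")
    case True
    then have "(p + 2 * r) mod m = p + 2 * r" by simp
    then show ?thesis using h True by (simp add: cd_le min_def)
  next
    case False
    then have "(p + 2 * r) mod m = p + 2 * r - m" using mod_2m[of "p + 2 * r" m] h by auto
    then show ?thesis using h False by (auto simp: cd_ge min_def)
  qed
qed

lemma mod_r_r: "(m::nat) = 2 * r + 1 \<Longrightarrow> ((p + r) mod m + r) mod m = (p + 2 * r) mod m"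
  by (simp add: mod_simps add.assoc mult_2)

lemma win_cd: "m = 2 * r + 1 \<Longrightarrow> 1 \<le> r \<Longrightarrow> p < m \<Longrightarrow> a \<in> win m r p \<Longrightarrow> c \<in> win m r p \<Longrightarrow>
  cd m a c = 0 \<or> cd m a c = 1 \<or> cd m a c = r"
proof -
  assume h: "m = 2 * r + 1" "1 \<le> r" "p < m" "a \<in> win m r p" "c \<in> win m r p"
  have q: "(p + r) mod m < m" using h by simp
  have 1: "cd m p ((p + r) mod m) = r" using cd_r h by blast
  have 2: "cd m ((p + r) mod m) ((p + 2 * r) mod m) = r"
    using cd_r[OF h(1,2) q] mod_r_r[OF h(1)] by simp
  have 3: "cd m p ((p + 2 * r) mod m) = 1" using cd_1 h by blast
  show ?thesis using h(4,5) 1 2 3 cd_sym[of m] cd_self[of m] unfolding win_def by auto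
qed

lemma nx_inj: "a < m \<Longrightarrow> b < m \<Longrightarrow> nx m a = nx m b \<Longrightarrow> a = b"
  by (auto simp: nx_def split: if_splits)

lemma closure_mod:
  assumes "\<forall>y\<in>X. Suc y mod m \<in> X" "x \<in> X" "0 < m" "x < m"
  shows "(x + k) mod m \<in> X"
proof (induction k)
  case 0 then show ?case using assms by simp
next
  case (Suc k)
  have "(x + Suc k) mod m = Suc ((x + k) mod m) mod m" by (simp add: mod_Suc_eq)
  then show ?case using assms(1) Suc by simp
qed

lemma hits:
  assumes m: "m = 2 * r + 1" and r1: "1 \<le> r" and X: "X \<subseteq> {0..<m}"
    and ind: "\<forall>x\<in>X. (x + r) mod m \<notin> X"
  shows "m * card X \<le> r * card {p \<in> {0..<m}. X \<inter> win m r p \<noteq> {}}"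
proof (cases "X = {}")
  case True then show ?thesis by simp
next
  case False
  let ?h = "{p \<in> {0..<m}. X \<inter> win m r p \<noteq> {}}"
  define sh where "sh x = (x + (r + 1)) mod m" for x
  have m0: "0 < m" using m by simp
  have shr: "(sh x + r) mod m = x" if "x < m" for x
  proof -
    have "(sh x + r) mod m = (x + m) mod m" unfolding sh_def using m by (simp add: mod_simps add.assoc mult_2)
    then show ?thesis using that by simp
  qed
  have finX: "finite X" using X finite_subset by blast
  have shX: "sh ` X \<subseteq> ?h"
  proof
    fix z assume "z \<in> sh ` X"
    then obtain x where x: "x \<in> X" "z = sh x" by blast
    then have "(z + r) mod m = x" using shr X by auto
    then show "z \<in> ?h" using x m0 unfolding win_def sh_def by auto
  qed
  have XX: "X \<subseteq> ?h" using X unfolding win_def by auto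
  have disj: "X \<inter> sh ` X = {}"
  proof (rule ccontr)
    assume "X \<inter> sh ` X \<noteq> {}"
    then obtain x where "x \<in> X" "sh x \<in> X" by blast
    then show False using ind shr X by fastforce
  qed
  have injsh: "inj_on sh X"
  proof
    fix x y assume "x \<in> X" "y \<in> X" "sh x = sh y"
    then show "x = y" using shr X by (metis atLeastLessThan_iff subsetD)
  qed
  obtain y where y: "y \<in> X" "Suc y mod m \<notin> X"
  proof (rule ccontr)
    assume "\<not> thesis"
    then have cl: "\<forall>y\<in>X. Suc y mod m \<in> X" using that by blast
    obtain x where x: "x \<in> X" using False by blast
    have "(x + r) mod m \<in> X" using closure_mod[OF cl x m0] X x by auto
    then show False using ind x by blast
  qed
  define z where "z = Suc y mod m"
  have ym: "y < m" using y X by auto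
  have zh: "z \<in> ?h"
  proof -
    have "(z + 2 * r) mod m = (y + m) mod m" unfolding z_def using m by (simp add: mod_simps mult_2)
    then have "(z + 2 * r) mod m = y" using ym by simp
    then show ?thesis using y m0 unfolding win_def z_def by auto
  qed
  have znX: "z \<notin> X" using y z_def by simp
  have znsh: "z \<notin> sh ` X"
  proof
    assume "z \<in> sh ` X"
    then obtain x where x: "x \<in> X" "z = sh x" by blast
    have xm: "x < m" using x X by auto
    have "Suc ((x + r) mod m) mod m = sh x" unfolding sh_def by (simp add: mod_simps)
    then have "nx m ((x + r) mod m) = nx m y" using x Suc_mod_nx m0 ym z_def
      by (metis mod_less_divisor)
    then have "(x + r) mod m = y" using nx_inj m0 ym by (metis mod_less_divisor)
    then show False using ind x y by blast
  qed
  have finh: "finite ?h" by simp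
  have c2: "card (X \<union> sh ` X) = 2 * card X"
    using card_Un_disjoint[OF finX finite_imageI[OF finX] disj] card_image[OF injsh] by simp
  have c3: "card (insert z (X \<union> sh ` X)) = card (X \<union> sh ` X) + 1"
    using znX znsh finX by simp
  have "insert z (X \<union> sh ` X) \<subseteq> ?h" using zh XX shX by blast
  then have "card (insert z (X \<union> sh ` X)) \<le> card ?h" by (rule card_mono[OF finh])
  then have c1: "2 * card X + 1 \<le> card ?h" using c2 c3 by linarith
  have "sh ` X \<subseteq> {0..<m}" unfolding sh_def using m0 by auto
  then have "X \<union> sh ` X \<subseteq> {0..<m}" using X by blast
  then have "card (X \<union> sh ` X) \<le> card {0..<m}" by (rule card_mono[rotated]) simp
  then have "2 * card X \<le> m" using c2 by simp
  then have "card X \<le> r" using m by simp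
  then have "m * card X \<le> r * (2 * card X + 1)" using m by (simp add: algebra_simps)
  also have "\<dots> \<le> r * card ?h" using mult_le_mono2[OF c1] by simp
  finally show ?thesis .
qed



definition cn :: "'a graph \<Rightarrow> 'a \<Rightarrow> 'a set" where "cn G b = insert b {w. adj G b w}"
definition rho :: "'a graph \<Rightarrow> 'a \<Rightarrow> 'a" where "rho G b = (SOME t. t \<in> verts G \<and> cn G t = cn G b)"

context sg
begin

lemma rho_props: "b \<in> verts G \<Longrightarrow> rho G b \<in> verts G \<and> cn G (rho G b) = cn G b"
  unfolding rho_def by (rule someI[of _ b]) simp

lemma rho_eq: "b \<in> verts G \<Longrightarrow> d \<in> verts G \<Longrightarrow> rho G b = rho G d \<longleftrightarrow> cn G b = cn G d"
proof
  assume "b \<in> verts G" "d \<in> verts G" "rho G b = rho G d"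
  then show "cn G b = cn G d" using rho_props by metis
next
  assume "cn G b = cn G d"
  then show "rho G b = rho G d" unfolding rho_def by simp
qed

lemma dist1_adj: "u \<in> verts G \<Longrightarrow> v \<in> verts G \<Longrightarrow> gdist G u v = 1 \<Longrightarrow> adj G u v"
proof -
  assume h: "u \<in> verts G" "v \<in> verts G" "gdist G u v = 1"
  then have "u \<noteq> v" using dist_self by auto
  then obtain w where w: "adj G u w" "gdist G w v + 1 = gdist G u v" using dist_step h by blast
  then have "gdist G w v = 0" using h by simp
  moreover have "w \<in> verts G" using adjV w h by blast
  ultimately have "w = v" using dist_0 h by blast
  then show ?thesis using w by simp
qed

lemma twin_mmd: "b \<in> verts G \<Longrightarrow> d \<in> verts G \<Longrightarrow> b \<noteq> d \<Longrightarrow> cn G b = cn G d \<Longrightarrow>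
  mmd G b d \<and> gdist G b d = 1"
proof -
  assume h: "b \<in> verts G" "d \<in> verts G" "b \<noteq> d" "cn G b = cn G d"
  have "b \<in> cn G d" using h(4) unfolding cn_def by auto
  then have bd: "adj G d b" using h(3) unfolding cn_def by auto
  then have d1: "gdist G b d = 1" using dist_adj1 adj_sym h by blast
  have A: "gdist G w d \<le> 1" if "adj G b w" for w
  proof -
    have wV: "w \<in> verts G" using adjV that h by blast
    have "w \<in> cn G d" using that h(4) unfolding cn_def by auto
    then have "w = d \<or> adj G d w" unfolding cn_def by auto
    then show ?thesis using dist_self dist_adj1 adj_sym wV h by (metis le_refl zero_le_one)
  qed
  have B: "gdist G b w \<le> 1" if "adj G d w" for w
  proof -
    have wV: "w \<in> verts G" using adjV that h by blast
    have "w \<in> cn G b" using that h(4) unfolding cn_def by auto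
    then have "w = b \<or> adj G b w" unfolding cn_def by auto
    then show ?thesis using dist_self dist_adj1 wV h by (metis le_refl zero_le_one)
  qed
  show ?thesis unfolding mmd_def using h d1 A B by auto
qed

lemma mmd_nontwin: "mmd G b d \<Longrightarrow> cn G b \<noteq> cn G d \<Longrightarrow> 2 \<le> gdist G b d"
proof (rule ccontr)
  assume m: "mmd G b d" and c: "cn G b \<noteq> cn G d" and "\<not> 2 \<le> gdist G b d"
  have V: "b \<in> verts G" "d \<in> verts G" "b \<noteq> d" using m unfolding mmd_def by auto
  have "gdist G b d \<noteq> 0" using V dist_0 by blast
  then have d1: "gdist G b d = 1" using \<open>\<not> 2 \<le> gdist G b d\<close> by simp
  then have bd: "adj G b d" using dist1_adj V by blast
  have sub: "cn G x \<subseteq> cn G y" if "mmd G x y" "gdist G x y = 1" for x y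
  proof
    fix z assume z: "z \<in> cn G x"
    have xy: "x \<in> verts G" "y \<in> verts G" "x \<noteq> y" using that unfolding mmd_def by auto
    have axy: "adj G x y" using dist1_adj xy that by blast
    show "z \<in> cn G y"
    proof (cases "z = x")
      case True then show ?thesis using axy adj_sym unfolding cn_def by auto
    next
      case False
      then have azx: "adj G x z" using z unfolding cn_def by auto
      have zV: "z \<in> verts G" using adjV azx xy by blast
      have "gdist G z y \<le> 1" using that azx unfolding mmd_def by auto
      then have "z = y \<or> gdist G z y = 1" using dist_0 zV xy by (metis le_neq_implies_less less_one)
      then show ?thesis using dist1_adj zV xy adj_sym unfolding cn_def by auto
    qed
  qed
  have "cn G b \<subseteq> cn G d" using sub m d1 by blast
  moreover have "cn G d \<subseteq> cn G b" using sub mmd_sym[OF m] d1 dist_sym V by metis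
  ultimately show False using c by blast
qed

end



lemma card_filter_ind: "finite A \<Longrightarrow> card {x \<in> A. Q x} = (\<Sum>x\<in>A. if Q x then 1 else 0)"
  using sum.inter_filter[of A "\<lambda>_. 1::nat" Q] by simp

context prod
begin

lemma upper: "strong_metric_dim P \<le> card (verts H) * (r + 1) + r * strong_metric_dim H"
proof -
  obtain W where W: "strong_resolving_set H W" "card W = strong_metric_dim H" using Hs.dim_ex by blast
  have WV: "W \<subseteq> verts H" using W(1) unfolding strong_resolving_set_def by blast
  define S where "S = ({0..<m} \<times> W) \<union> ({0..r} \<times> (verts H - W))"
  have SV: "S \<subseteq> verts P" unfolding S_def using WV by auto
  have "strong_resolving_set P S"
  proof (rule Ps.mmd_resolving[OF SV])
    fix x y assume mm: "mmd P x y"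
    obtain a b c d where xy: "x = (a, b)" "y = (c, d)" by fastforce
    have V: "a < m" "c < m" "b \<in> verts H" "d \<in> verts H" using mm xy unfolding mmd_def by auto
    consider "b \<in> W" | "d \<in> W" | "b \<notin> W" "d \<notin> W" by blast
    then show "x \<in> S \<or> y \<in> S"
    proof cases
      case 1 then show ?thesis using V xy unfolding S_def by auto
    next
      case 2 then show ?thesis using V xy unfolding S_def by auto
    next
      case 3
      have "cd m a c = r \<or> mmd H b d" using mmdP_nec mm xy by blast
      moreover have "\<not> mmd H b d" using Hs.resolving_mmd[OF W(1)] 3 by blast
      ultimately have "cd m a c = r" by blast
      then have "a \<le> r \<or> c \<le> r" using cd_high[of m r a c] V by fastforce
      then show ?thesis using V 3 xy unfolding S_def by auto
    qed
  qed
  then have "strong_metric_dim P \<le> card S" by (rule Ps.dim_le)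
  also have "card S = m * card W + (r + 1) * (card (verts H) - card W)"
  proof -
    have fin: "finite W" "finite (verts H - W)" using WV Hs.finV finite_subset by auto
    have "card S = card ({0..<m} \<times> W) + card ({0..r} \<times> (verts H - W))"
      unfolding S_def by (rule card_Un_disjoint) (use fin in auto)
    moreover have "card (verts H - W) = card (verts H) - card W" using card_Diff_subset[OF fin(1) WV] .
    ultimately show ?thesis by (simp add: card_cartesian_product)
  qed
  also have "\<dots> = card (verts H) * (r + 1) + r * card W"
  proof -
    have "card W \<le> card (verts H)" using card_mono[OF Hs.finV WV] .
    then obtain k where "card (verts H) = card W + k" using le_iff_add by blast
    then show ?thesis by (simp add: algebra_simps)
  qed
  finally show ?thesis using W(2) by simp
qed

lemma lower: "card (verts H) * (r + 1) + r * strong_metric_dim H \<le> strong_metric_dim P"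
proof -
  let ?n = "card (verts H)"
  let ?dH = "strong_metric_dim H"
  obtain S0 where S0: "strong_resolving_set P S0" "card S0 = strong_metric_dim P" using Ps.dim_ex by blast
  have S0V: "S0 \<subseteq> verts P" using S0(1) unfolding strong_resolving_set_def by blast
  define M where "M = verts P - S0"
  have finP: "finite (verts P)" using Ps.finV .
  have finM: "finite M" unfolding M_def using finP by simp
  have MV: "M \<subseteq> {0..<m} \<times> verts H" unfolding M_def by auto
  have noM: "\<not> mmd P x y" if "x \<in> M" "y \<in> M" for x y
    using Ps.resolving_mmd[OF S0(1)] that unfolding M_def by blast
  define f where "f = (\<lambda>(a::nat, b). (a, rho H b))"
  define M' where "M' = f ` M"
  define T where "T = rho H ` verts H"
  have finT: "finite T" unfolding T_def using Hs.finV by simp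
  have injf: "inj_on f M"
  proof
    fix x y assume xy: "x \<in> M" "y \<in> M" "f x = f y"
    obtain a b c d where ab: "x = (a, b)" "y = (c, d)" by fastforce
    have V: "a < m" "c < m" "b \<in> verts H" "d \<in> verts H" using xy MV ab by auto
    have ac: "a = c" and rb: "rho H b = rho H d" using xy ab unfolding f_def by auto
    show "x = y"
    proof (rule ccontr)
      assume "x \<noteq> y"
      then have "b \<noteq> d" using ab ac by simp
      moreover have "cn H b = cn H d" using rb Hs.rho_eq V by blast
      ultimately have "mmd H b d \<and> gdist H b d = 1" using Hs.twin_mmd V by blast
      then have "mmd P (a, b) (c, d)" using mmdP_B[of a c b d] V ac cd_self[of m c] by simp
      then show False using noM xy ab by blast
    qed
  qed
  have cardM': "card M' = card M" unfolding M'_def using card_image[OF injf] .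
  have M'sub: "M' \<subseteq> {0..<m} \<times> T" unfolding M'_def f_def T_def using MV by auto
  have M'pre: "\<exists>b. (a, b) \<in> M \<and> rho H b = t \<and> b \<in> verts H" if "(a, t) \<in> M'" for a t
    using that MV unfolding M'_def f_def by auto
  define N where "N t = {a. (a, t) \<in> M'}" for t
  have NX: "N t \<subseteq> {0..<m}" for t unfolding N_def using M'sub by auto
  have finN: "finite (N t)" for t using NX finite_subset by blast
  have Nind: "\<forall>a\<in>N t. (a + r) mod m \<notin> N t" for t
  proof (intro ballI notI)
    fix a assume a: "a \<in> N t" and c: "(a + r) mod m \<in> N t"
    obtain b where b: "(a, b) \<in> M" "rho H b = t" "b \<in> verts H" using M'pre a unfolding N_def by blast
    obtain d where d: "((a + r) mod m, d) \<in> M" "rho H d = t" "d \<in> verts H" using M'pre c unfolding N_def by blast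
    have am: "a < m" using subsetD[OF NX[of t] a] by simp
    have cdr: "cd m a ((a + r) mod m) = r" using cd_r[of m r a] am r1 by simp
    have "b = d \<or> mmd H b d"
    proof (cases "b = d")
      case False
      have "cn H b = cn H d" using b d Hs.rho_eq by blast
      then show ?thesis using Hs.twin_mmd b d False by blast
    qed simp
    then have "mmd P (a, b) ((a + r) mod m, d)" using mmdP_A[of a "(a + r) mod m" b d] am b d cdr by simp
    then show False using noM b d by blast
  qed
  define hit where "hit t = {p \<in> {0..<m}. N t \<inter> win m r p \<noteq> {}}" for t
  have hitb: "m * card (N t) \<le> r * card (hit t)" for t
    unfolding hit_def using hits[of m r "N t"] r1 NX Nind by blast
  define I' where "I' p = {t \<in> T. N t \<inter> win m r p \<noteq> {}}" for p
  have I'b: "card (I' p) \<le> ?n - ?dH" if pm: "p < m" for p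
  proof -
    define ch where "ch t = (SOME b. rho H b = t \<and> b \<in> verts H \<and> (\<exists>a\<in>win m r p. (a, b) \<in> M))" for t
    have chp: "rho H (ch t) = t \<and> ch t \<in> verts H \<and> (\<exists>a\<in>win m r p. (a, ch t) \<in> M)" if tI: "t \<in> I' p" for t
    proof -
      obtain a where "a \<in> N t" "a \<in> win m r p" using tI unfolding I'_def by blast
      then obtain b where "(a, b) \<in> M" "rho H b = t" "b \<in> verts H" using M'pre unfolding N_def by blast
      then have "\<exists>b. rho H b = t \<and> b \<in> verts H \<and> (\<exists>a\<in>win m r p. (a, b) \<in> M)"
        using \<open>a \<in> win m r p\<close> by blast
      then show ?thesis unfolding ch_def by (rule someI_ex)
    qed
    define I where "I = ch ` I' p"
    have injch: "inj_on ch (I' p)"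
      by (rule inj_onI) (metis chp)
    have cI: "card I = card (I' p)" unfolding I_def using card_image[OF injch] .
    have IV: "I \<subseteq> verts H" unfolding I_def using chp by blast
    have indep: "\<not> mmd H x y" if xyI: "x \<in> I" "y \<in> I" for x y
    proof
      assume mm: "mmd H x y"
      obtain t t' where tt: "t \<in> I' p" "t' \<in> I' p" "x = ch t" "y = ch t'" using xyI unfolding I_def by blast
      obtain a where a: "a \<in> win m r p" "(a, x) \<in> M" using chp tt by blast
      obtain c where c: "c \<in> win m r p" "(c, y) \<in> M" using chp tt by blast
      have xy: "x \<noteq> y" using mm unfolding mmd_def by blast
      then have "t \<noteq> t'" using tt by blast
      then have "rho H x \<noteq> rho H y" using chp tt by metis
      then have "cn H x \<noteq> cn H y" using Hs.rho_eq IV xyI by blast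
      then have D2: "2 \<le> gdist H x y" using Hs.mmd_nontwin mm by blast
      have am: "a < m" "c < m" using a c MV by auto
      have "cd m a c = 0 \<or> cd m a c = 1 \<or> cd m a c = r" using win_cd[of m r p a c] pm r1 a c by simp
      then have "mmd P (a, x) (c, y)"
      proof (elim disjE)
        assume "cd m a c = 0" then show ?thesis using mmdP_B[of a c x y] am mm D2 by simp
      next
        assume "cd m a c = 1" then show ?thesis using mmdP_B[of a c x y] am mm D2 by simp
      next
        assume "cd m a c = r" then show ?thesis using mmdP_A[of a c x y] am mm subsetD[OF IV xyI(1)] subsetD[OF IV xyI(2)] by simp
      qed
      then show False using noM a c by blast
    qed
    have "strong_resolving_set H (verts H - I)"
    proof (rule Hs.mmd_resolving)
      show "verts H - I \<subseteq> verts H" by blast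
    next
      fix x y assume "mmd H x y"
      then show "x \<in> verts H - I \<or> y \<in> verts H - I" using indep unfolding mmd_def by blast
    qed
    then have "?dH \<le> card (verts H - I)" by (rule Hs.dim_le)
    also have "\<dots> = ?n - card I" using card_Diff_subset[OF finite_subset[OF IV Hs.finV] IV] .
    finally have "?dH \<le> ?n - card I" .
    moreover have "card I \<le> ?n" using card_mono[OF Hs.finV IV] .
    ultimately show ?thesis using cI by linarith
  qed
  have c1: "card M' = (\<Sum>t\<in>T. card (N t))"
  proof -
    have "M' = (\<lambda>(t, a). (a, t)) ` (SIGMA t:T. N t)"
      unfolding N_def using M'sub by auto
    moreover have "inj_on (\<lambda>(t, a). (a, t)) (SIGMA t:T. N t)" by (auto simp: inj_on_def)
    ultimately have "card M' = card (SIGMA t:T. N t)" using card_image by metis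
    also have "\<dots> = (\<Sum>t\<in>T. card (N t))" using card_SigmaI[OF finT] finN by blast
    finally show ?thesis .
  qed
  have c2: "(\<Sum>t\<in>T. card (hit t)) = (\<Sum>p\<in>{0..<m}. card (I' p))"
  proof -
    have "(\<Sum>t\<in>T. card (hit t)) = (\<Sum>t\<in>T. \<Sum>p\<in>{0..<m}. if N t \<inter> win m r p \<noteq> {} then 1 else 0)"
      unfolding hit_def by (rule sum.cong[OF refl], rule card_filter_ind, simp)
    also have "\<dots> = (\<Sum>p\<in>{0..<m}. \<Sum>t\<in>T. if N t \<inter> win m r p \<noteq> {} then 1 else 0)"
      by (rule sum.swap)
    also have "\<dots> = (\<Sum>p\<in>{0..<m}. card (I' p))"
      unfolding I'_def by (rule sum.cong[OF refl], rule card_filter_ind[symmetric], rule finT)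
    finally show ?thesis .
  qed
  have "m * card M = m * (\<Sum>t\<in>T. card (N t))" using cardM' c1 by simp
  also have "\<dots> = (\<Sum>t\<in>T. m * card (N t))" by (rule sum_distrib_left)
  also have "\<dots> \<le> (\<Sum>t\<in>T. r * card (hit t))" by (rule sum_mono) (rule hitb)
  also have "\<dots> = r * (\<Sum>t\<in>T. card (hit t))" by (rule sum_distrib_left[symmetric])
  also have "\<dots> = r * (\<Sum>p\<in>{0..<m}. card (I' p))" using c2 by simp
  finally have A: "m * card M \<le> r * (\<Sum>p\<in>{0..<m}. card (I' p))" .
  have "(\<Sum>p\<in>{0..<m}. card (I' p)) \<le> (\<Sum>p\<in>{0..<m}. ?n - ?dH)"
    by (rule sum_mono) (rule I'b, simp)
  then have B: "(\<Sum>p\<in>{0..<m}. card (I' p)) \<le> m * (?n - ?dH)" by simp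
  have "m * card M \<le> r * (m * (?n - ?dH))" using A mult_le_mono2[OF B, of r] by (rule le_trans)
  then have "m * card M \<le> m * (r * (?n - ?dH))" by (simp only: mult.left_commute)
  then have cM: "card M \<le> r * (?n - ?dH)" by (subst (asm) mult_le_cancel1) simp
  have cP: "card (verts P) = m * ?n" by (simp add: card_cartesian_product)
  have cMS: "card M = card (verts P) - card S0" unfolding M_def using card_Diff_subset[OF finite_subset[OF S0V finP] S0V] .
  have cS: "card S0 \<le> card (verts P)" using card_mono[OF finP S0V] .
  have dn: "?dH \<le> ?n" using Hs.dim_le[OF Hs.resolving_V] .
  obtain k where k: "?n = ?dH + k" using dn le_iff_add by blast
  have k2: "?n - ?dH = k" using k by simp
  have e1: "m * ?n = (r + 1) * ?n + r * ?dH + r * k" using k by (simp add: algebra_simps)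
  have "card M \<le> r * k" using cM k2 by simp
  then have "m * ?n - card S0 \<le> r * k" using cMS cP by simp
  then have "(r + 1) * ?n + r * ?dH \<le> card S0" using e1 cS cP by linarith
  then show ?thesis using S0(2) by (simp add: ac_simps)
qed

end


theorem theorem19:
  fixes H :: "'a graph" and r n :: nat
  assumes "simple_graph H" and "connected_graph H"
    and "n = card (verts H)" and "n \<ge> 2" and "r \<ge> 1"
  shows "int n * (int r + 1) + int r * (int (strong_metric_dim H) - 1)
           \<le> int (strong_metric_dim (strong_product (cycle_graph (2 * r + 1)) H))
       \<and> int (strong_metric_dim (strong_product (cycle_graph (2 * r + 1)) H))
           \<le> int n * (int r + 1) + int r * int (strong_metric_dim H)"
proof -
  interpret sg H using assms(1,2) simple_ok by unfold_locales auto
  interpret prod H r using assms(5) by unfold_locales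
  have lo: "n * (r + 1) + r * strong_metric_dim H \<le> strong_metric_dim (strong_product (cycle_graph (2 * r + 1)) H)"
    using lower assms(3) by simp
  have up: "strong_metric_dim (strong_product (cycle_graph (2 * r + 1)) H) \<le> n * (r + 1) + r * strong_metric_dim H"
    using upper assms(3) by simp
  have lo': "int n * (int r + 1) + int r * int (strong_metric_dim H)
      \<le> int (strong_metric_dim (strong_product (cycle_graph (2 * r + 1)) H))"
    using lo by (metis (mono_tags, lifting) of_nat_add of_nat_le_iff of_nat_mult of_nat_Suc Suc_eq_plus1 add.commute)
  have up': "int (strong_metric_dim (strong_product (cycle_graph (2 * r + 1)) H))
      \<le> int n * (int r + 1) + int r * int (strong_metric_dim H)"
    using up by (metis (mono_tags, lifting) of_nat_add of_nat_le_iff of_nat_mult of_nat_Suc Suc_eq_plus1 add.commute)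
  have "int r * (int (strong_metric_dim H) - 1) \<le> int r * int (strong_metric_dim H)"
    by (simp add: algebra_simps)
  then show ?thesis using lo' up' by linarith
qed



end
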